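(* Let $n\geq1$ and $1\leq k\leq n$. Then there exists $\eta\in\Omega$ with $\eta\neq\eta_k$ such that $f_k(m_{J_\eta})=f_k(m_{J_{\eta_k}})$.
   Context: $f_k(v)=kv_1+(1-k)v_2$. $\Lambda_{3,n}=\{\beta\in\mathbb N^3:1\leq|\beta|\leq n\}$; $A_n=\begin{pmatrix}1&1&n\\0&1&n+1\end{pmatrix}$; for $J\subset\Lambda_{3,n}$, $m_J=\sum_{\beta\in J}A_n\beta$. $\Omega$ is the set of $\eta=(z,d_0,\ldots,d_r)$ with $z\in\{0,1\}$, $d_0=0$, $d_i\geq1$ ($1\leq i\leq r$), $\sum d_i=n$. For $j\in\{1,\ldots,n\}$, $t$ unique with $\sum_{i<t}d_i<j\leq\sum_{i\leq t}d_i$, $c=j-\sum_{i<t}d_i$; $v_{j,\eta}=(\sum_{i\text{ odd},i<t}d_i+c,0)$ if $z=1,t$ odd; $(0,\sum_{i\text{ even},i<t}d_i+c)$ if $z=1,t$ even; $(0,\sum_{i\text{ odd},i<t}d_i+c)$ if $z=0,t$ odd; $(\sum_{i\text{ even},i<t}d_i+c,0)$ if $z=0,t$ even. $T_{j,\eta}=\{v_{j,\eta}+p(1,1):0\leq p\leq n-j\}$, $T_{0,\eta}=\{(p,p):1\leq p\leq n\}$, $r_{j,\eta}=n\pi_2(v_{j,\eta})$, $T'_\eta=T_{0,\eta}\cup\bigcup_{j=1}^n(T_{j,\eta}+r_{j,\eta}(1,1))$, and $J_\eta=\{\beta\in\Lambda_{3,n}:A_n\beta\in T'_\eta\}$ (which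 $\beta\mapsto A_n\beta$ maps bijectively onto $T'_\eta$). $\eta_k$: $z_k=1$ if $k\leq n+1-k$, else $0$; $d_{k,0}=0$; for $l\geq1$, $O_l=\sum_{j\text{ odd},j\leq l-1}d_{k,j}$, $E_l=\sum_{j\text{ even},j\leq l-1}d_{k,j}$; $t_l=\max\{m\in\mathbb N:mk\leq(E_l+1)(n+1-k)\}$ ($z_k=1$, $l$ odd), $\max\{m:m(n+1-k)\leq(O_l+1)k\}$ ($z_k=1$, $l$ even), $\max\{m:m(n+1-k)\leq(E_l+1)k\}$ ($z_k=0$, $l$ odd), $\max\{m:mk\leq(O_l+1)(n+1-k)\}$ ($z_k=0$, $l$ even); $s_1=0$, $s_l=O_l$ (odd $l>1$), $s_l=E_l$ (even $l$); $d_{k,l}=\min\{n-\sum_{j<l}d_{k,j},t_l-s_l\}$, stopping at first $r$ with $\sum_{j\leq r}d_{k,j}=n$; $\eta_k=(z_k,d_{k,0},\ldots,d_{k,r})\in\Omega$. *)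

theory Defs
  imports Main
begin

definition fk :: "nat \<Rightarrow> int \<times> int \<Rightarrow> int" where
  "fk k v = int k * fst v + (1 - int k) * snd v"

definition Lambda3 :: "nat \<Rightarrow> (nat \<times> nat \<times> nat) set" where
  "Lambda3 n = {(a, b, c). 1 \<le> a + b + c \<and> a + b + c \<le> n}"

text \<open>\<open>A_n \<beta>\<close> for \<open>A_n = ((1,1,n),(0,1,n+1))\<close>.\<close>
definition An :: "nat \<Rightarrow> nat \<times> nat \<times> nat \<Rightarrow> int \<times> int" where
  "An n \<beta> = (case \<beta> of (a, b, c) \<Rightarrow> (int (a + b + n * c), int (b + (n + 1) * c)))"

definition mJ :: "nat \<Rightarrow> (nat \<times> nat \<times> nat) set \<Rightarrow> int \<times> int" where
  "mJ n J = ((\<Sum>\<beta>\<in>J. fst (An n \<beta>)), (\<Sum>\<beta>\<in>J. snd (An n \<beta>)))"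

text \<open>\<open>\<eta> = (z, d_0, \<dots>, d_r)\<close> is represented as the pair \<open>(z, [d_0, \<dots>, d_r])\<close>.\<close>
definition Omega :: "nat \<Rightarrow> (nat \<times> nat list) set" where
  "Omega n = {(z, ds). z \<in> {0, 1} \<and> ds \<noteq> [] \<and> ds ! 0 = 0 \<and>
                (\<forall>i. 1 \<le> i \<and> i < length ds \<longrightarrow> 1 \<le> ds ! i) \<and> sum_list ds = n}"

definition psum :: "nat list \<Rightarrow> nat \<Rightarrow> nat" where
  "psum ds t = (\<Sum>i<t. ds ! i)"

definition oddsum :: "nat list \<Rightarrow> nat \<Rightarrow> nat" where
  "oddsum ds t = (\<Sum>i\<in>{i. i < t \<and> odd i}. ds ! i)"

definition evensum :: "nat list \<Rightarrow> nat \<Rightarrow> nat" where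
  "evensum ds t = (\<Sum>i\<in>{i. i < t \<and> even i}. ds ! i)"

definition tidx :: "nat list \<Rightarrow> nat \<Rightarrow> nat" where
  "tidx ds j = (THE t. t < length ds \<and> psum ds t < j \<and> j \<le> psum ds (Suc t))"

definition vje :: "nat \<Rightarrow> nat \<times> nat list \<Rightarrow> int \<times> int" where
  "vje j \<eta> = (case \<eta> of (z, ds) \<Rightarrow>
     (let t = tidx ds j; c = j - psum ds t in
      if z = 1 \<and> odd t then (int (oddsum ds t + c), 0)
      else if z = 1 \<and> even t then (0, int (evensum ds t + c))
      else if z = 0 \<and> odd t then (0, int (oddsum ds t + c))
      else (int (evensum ds t + c), 0)))"

definition T0 :: "nat \<Rightarrow> (int \<times> int) set" where
  "T0 n = {(int p, int p) | p. 1 \<le> p \<and> p \<le> n}"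

definition Tj :: "nat \<Rightarrow> nat \<Rightarrow> nat \<times> nat list \<Rightarrow> (int \<times> int) set" where
  "Tj n j \<eta> = {(fst (vje j \<eta>) + int p, snd (vje j \<eta>) + int p) | p. p \<le> n - j}"

definition rje :: "nat \<Rightarrow> nat \<Rightarrow> nat \<times> nat list \<Rightarrow> int" where
  "rje n j \<eta> = int n * snd (vje j \<eta>)"

definition Tprime :: "nat \<Rightarrow> nat \<times> nat list \<Rightarrow> (int \<times> int) set" where
  "Tprime n \<eta> = T0 n \<union>
     (\<Union>j\<in>{1..n}. (\<lambda>x. (fst x + rje n j \<eta>, snd x + rje n j \<eta>)) ` Tj n j \<eta>)"

definition Jeta :: "nat \<Rightarrow> nat \<times> nat list \<Rightarrow> (nat \<times> nat \<times> nat) set" where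
  "Jeta n \<eta> = {\<beta> \<in> Lambda3 n. An n \<beta> \<in> Tprime n \<eta>}"

definition zk :: "nat \<Rightarrow> nat \<Rightarrow> nat" where
  "zk n k = (if k \<le> n + 1 - k then 1 else 0)"

primrec dlist :: "nat \<Rightarrow> nat \<Rightarrow> nat \<Rightarrow> nat list" where
  "dlist n k 0 = [0]"
| "dlist n k (Suc l) =
     (let ds = dlist n k l; L = Suc l;
          Os = oddsum ds L; E = evensum ds L; z = zk n k;
          t = (if z = 1 \<and> odd L then (GREATEST m::nat. m * k \<le> (E + 1) * (n + 1 - k))
               else if z = 1 \<and> even L then (GREATEST m::nat. m * (n + 1 - k) \<le> (Os + 1) * k)
               else if z = 0 \<and> odd L then (GREATEST m::nat. m * (n + 1 - k) \<le> (E + 1) * k)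
               else (GREATEST m::nat. m * k \<le> (Os + 1) * (n + 1 - k)));
          s = (if L = 1 then 0 else if odd L then Os else E);
          d = min (n - sum_list ds) (t - s)
      in ds @ [d])"

definition dk :: "nat \<Rightarrow> nat \<Rightarrow> nat \<Rightarrow> nat" where
  "dk n k l = dlist n k l ! l"

definition rk :: "nat \<Rightarrow> nat \<Rightarrow> nat" where
  "rk n k = (LEAST r. (\<Sum>j\<le>r. dk n k j) = n)"

definition etak :: "nat \<Rightarrow> nat \<Rightarrow> nat \<times> nat list" where
  "etak n k = (zk n k, map (dk n k) [0..<Suc (rk n k)])"

end

theory Submission
  imports Defs
begin
declare dlist.simps(2)[simp del]

lemma greatest_div:
  assumes "(0::nat) < a"
  shows "(GREATEST m::nat. m * a \<le> X) = X div a"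
proof (rule Greatest_equality)
  show "X div a * a \<le> X" by (simp add: div_times_less_eq_dividend)
  fix y assume "y * a \<le> X"
  then show "y \<le> X div a" using assms by (simp add: less_eq_div_iff_mult_less_eq)
qed

lemma dlist_app: "\<exists>d. dlist n k (Suc l) = dlist n k l @ [d]"
  by (simp only: dlist.simps Let_def) blast

lemma dlist_len: "length (dlist n k l) = Suc l"
proof (induction l)
  case 0 then show ?case by simp
next
  case (Suc l) then show ?case using dlist_app[of n k l] by auto
qed

lemma dlist_prefix: "i \<le> l \<Longrightarrow> l \<le> m \<Longrightarrow> dlist n k m ! i = dlist n k l ! i"
proof (induction m)
  case 0 then show ?case by simp
next
  case (Suc m)
  show ?case
  proof (cases "l = Suc m")
    case True then show ?thesis by simp
  next
    case False
    then have "l \<le> m" using Suc by simp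
    then have "i < length (dlist n k m)" using Suc by (simp add: dlist_len)
    then have "dlist n k (Suc m) ! i = dlist n k m ! i"
      using dlist_app[of n k m] by (auto simp: nth_append)
    then show ?thesis using Suc \<open>l \<le> m\<close> by simp
  qed
qed

lemma dlist_0: "dlist n k l ! 0 = 0"
  using dlist_prefix[of 0 0 l n k] by simp

lemma oddsum_Suc: "oddsum ds (Suc t) = oddsum ds t + (if odd t then ds ! t else 0)"
proof -
  have "{i. i < Suc t \<and> odd i} = (if odd t then insert t {i. i < t \<and> odd i} else {i. i < t \<and> odd i})"
    by (auto simp: less_Suc_eq)
  then show ?thesis unfolding oddsum_def by simp
qed

lemma evensum_Suc: "evensum ds (Suc t) = evensum ds t + (if even t then ds ! t else 0)"
proof -
  have "{i. i < Suc t \<and> even i} = (if even t then insert t {i. i < t \<and> even i} else {i. i < t \<and> even i})"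
    by (auto simp: less_Suc_eq)
  then show ?thesis unfolding evensum_def by simp
qed

lemma psum_Suc: "psum ds (Suc t) = psum ds t + ds ! t"
  unfolding psum_def by simp

lemma oddsum_0[simp]: "oddsum ds 0 = 0" unfolding oddsum_def by simp
lemma evensum_0[simp]: "evensum ds 0 = 0" unfolding evensum_def by simp
lemma psum_0[simp]: "psum ds 0 = 0" unfolding psum_def by simp

lemma psum_split: "psum ds t = oddsum ds t + evensum ds t"
  by (induction t) (auto simp: oddsum_Suc evensum_Suc psum_Suc)

lemma sum_list_psum: "sum_list ds = psum ds (length ds)"
  unfolding psum_def by (simp add: sum_list_sum_nth atLeast0LessThan)

lemma oddsum_app: "t \<le> length ds \<Longrightarrow> oddsum (ds @ xs) t = oddsum ds t"
  unfolding oddsum_def by (rule sum.cong) (auto simp: nth_append)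
lemma evensum_app: "t \<le> length ds \<Longrightarrow> evensum (ds @ xs) t = evensum ds t"
  unfolding evensum_def by (rule sum.cong) (auto simp: nth_append)
lemma psum_app: "t \<le> length ds \<Longrightarrow> psum (ds @ xs) t = psum ds t"
  unfolding psum_def by (rule sum.cong) (auto simp: nth_append)

definition "Pn n k = (if zk n k = 1 then n + 1 - k else k)"
definition "Qn n k = (if zk n k = 1 then k else n + 1 - k)"
definition "Od n k l = oddsum (dlist n k l) (Suc l)"
definition "Ev n k l = evensum (dlist n k l) (Suc l)"

lemma Od0[simp]: "Od n k 0 = 0" unfolding Od_def by (simp add: oddsum_Suc)
lemma Ev0[simp]: "Ev n k 0 = 0" unfolding Ev_def by (simp add: evensum_Suc)

lemma PQ: assumes "1 \<le> k" "k \<le> n"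
  shows "Qn n k \<le> Pn n k" "1 \<le> Qn n k" "Pn n k + Qn n k = n + 1"
  using assms unfolding Pn_def Qn_def zk_def by auto

lemma step:
  assumes "1 \<le> k" "k \<le> n"
  shows "dlist n k (Suc l) ! Suc l = min (n - (Od n k l + Ev n k l))
     (if even l then (Ev n k l + 1) * Pn n k div Qn n k - Od n k l
      else (Od n k l + 1) * Qn n k div Pn n k - Ev n k l)"
proof -
  have len: "Suc l = length (dlist n k l)" by (simp add: dlist_len)
  have nthl: "length xs = m \<Longrightarrow> (xs @ [x]) ! m = x" for xs m and x :: nat by auto
  have sl: "sum_list (dlist n k l) = Od n k l + Ev n k l"
    unfolding Od_def Ev_def by (simp add: sum_list_psum psum_split dlist_len)
  have q0: "0 < Qn n k" "0 < Pn n k" using PQ[OF assms] by auto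
  have g1: "(GREATEST m::nat. m * k \<le> X) = X div k" for X
    using assms by (intro greatest_div) auto
  have g2: "(GREATEST m::nat. m * (n + 1 - k) \<le> X) = X div (n + 1 - k)" for X
    using assms by (intro greatest_div) auto
  have s1: "oddsum (dlist n k l) (Suc 0) = 0" by (simp add: oddsum_Suc)
  have sdef: "(if Suc l = 1 then 0 else if odd (Suc l) then Od n k l else Ev n k l)
      = (if even l then Od n k l else Ev n k l)" by (cases "l = 0") auto
  have h01: "((0::nat) = 1) = False" by simp
  show ?thesis
    apply (simp only: dlist.simps(2) Let_def)
    apply (subst nthl[OF len[symmetric]])
    apply (simp only: sl Od_def[symmetric] Ev_def[symmetric] sdef)
    apply (cases "k \<le> n + 1 - k")
     apply (simp only: zk_def Pn_def Qn_def if_True if_False g1 g2 simp_thms odd_Suc_div_two even_Suc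
        mult.commute[of k] mult.commute[of "n + 1 - k"] refl)
     apply (cases "even l"; simp only: if_True if_False simp_thms)
    apply (simp only: zk_def Pn_def Qn_def if_True if_False g1 g2 simp_thms even_Suc h01
        mult.commute[of k] mult.commute[of "n + 1 - k"] refl)
    apply (cases "even l"; simp only: if_True if_False simp_thms)
    done
qed
lemma gstep:
  fixes A0 B0 P Q n t m :: nat
  assumes Q0: "0 < Q" and lt: "A0 + B0 < n"
    and i1: "B0 * P \<le> (A0 + 1) * Q" and i2: "(A0 + 1) * Q \<le> (B0 + 1) * P"
    and tdef: "t = (B0 + 1) * P div Q" and mdef: "m = min (n - (A0 + B0)) (t - A0)"
  shows "1 \<le> m" "A0 + m + B0 \<le> n"
    "A0 + m + B0 < n \<Longrightarrow> (A0 + m) * Q \<le> (B0 + 1) * P \<and> (B0 + 1) * P \<le> (A0 + m + 1) * Q"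
    "A0 + m + B0 = n \<Longrightarrow> n + 1 = P + Q \<Longrightarrow> A0 + m = P \<and> B0 = Q - 1"
proof -
  have "A0 + 1 \<le> t" using i2 Q0 tdef by (simp add: less_eq_div_iff_mult_less_eq)
  then show "1 \<le> m" using lt mdef by linarith
  show "A0 + m + B0 \<le> n" using mdef lt by simp
  have tQ: "t * Q \<le> (B0 + 1) * P" using tdef by (simp add: div_times_less_eq_dividend)
  have tQ2: "(B0 + 1) * P < (t + 1) * Q"
  proof -
    have "(B0 + 1) * P = t * Q + (B0 + 1) * P mod Q" using tdef by simp
    moreover have "(B0 + 1) * P mod Q < Q" using Q0 by simp
    ultimately show ?thesis by simp
  qed
  show "A0 + m + B0 < n \<Longrightarrow> (A0 + m) * Q \<le> (B0 + 1) * P \<and> (B0 + 1) * P \<le> (A0 + m + 1) * Q"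
  proof -
    assume "A0 + m + B0 < n"
    then have "A0 + m = t" using mdef \<open>A0 + 1 \<le> t\<close> by auto
    then show ?thesis using tQ tQ2 by simp
  qed
  assume fin: "A0 + m + B0 = n" and nPQ: "n + 1 = P + Q"
  have "A0 + m \<le> t" using mdef \<open>A0 + 1 \<le> t\<close> by auto
  then have A: "(A0 + m) * Q \<le> (B0 + 1) * P" using tQ mult_le_mono1 order_trans by blast
  have B: "Q \<le> B0 + 1"
  proof (rule ccontr)
    assume "\<not> Q \<le> B0 + 1"
    then have "B0 + 1 \<le> Q - 1" by simp
    then have c1: "(B0 + 1) * P \<le> (Q - 1) * P" by (rule mult_le_mono1)
    have "A0 + m \<ge> P + 1" using fin nPQ \<open>B0 + 1 \<le> Q - 1\<close> by simp
    then have c2: "(P + 1) * Q \<le> (A0 + m) * Q" by (rule mult_le_mono1)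
    have "(Q - 1) * P < (P + 1) * Q" using Q0
      by (simp add: algebra_simps diff_mult_distrib)
    then show False using A c1 c2 by linarith
  qed
  have C: "B0 \<le> Q - 1"
  proof (rule ccontr)
    assume "\<not> B0 \<le> Q - 1"
    then have "Q \<le> B0" by simp
    then have c1: "Q * P \<le> B0 * P" by (rule mult_le_mono1)
    have "A0 + 1 \<le> P - 1" using lt nPQ \<open>Q \<le> B0\<close> by linarith
    then have c2: "(A0 + 1) * Q \<le> (P - 1) * Q" by (rule mult_le_mono1)
    have "P \<ge> 1" using lt nPQ \<open>Q \<le> B0\<close> by linarith
    then have "Q \<le> P * Q" by simp
    then have "(P - 1) * Q < Q * P" using Q0 by (simp add: diff_mult_distrib mult.commute[of Q P])
    then show False using i1 c1 c2 by linarith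
  qed
  show "A0 + m = P \<and> B0 = Q - 1" using B C fin nPQ Q0 by arith
qed


context
  fixes n k :: nat
  assumes k1: "1 \<le> k" and kn: "k \<le> n"
begin

lemma OE_Suc:
  "Od n k (Suc l) = Od n k l + (if even l then dlist n k (Suc l) ! Suc l else 0)"
  "Ev n k (Suc l) = Ev n k l + (if odd l then dlist n k (Suc l) ! Suc l else 0)"
proof -
  obtain d where h: "dlist n k (Suc l) = dlist n k l @ [d]" using dlist_app by blast
  have len: "length (dlist n k l) = Suc l" by (simp add: dlist_len)
  have dd: "dlist n k (Suc l) ! Suc l = d" using h len by (metis nth_append_length)
  show "Od n k (Suc l) = Od n k l + (if even l then dlist n k (Suc l) ! Suc l else 0)"
    unfolding Od_def h dd oddsum_Suc[of _ "Suc l"] using len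
    by (simp add: oddsum_app nth_append_length)
  show "Ev n k (Suc l) = Ev n k l + (if odd l then dlist n k (Suc l) ! Suc l else 0)"
    unfolding Ev_def h dd evensum_Suc[of _ "Suc l"] using len
    by (simp add: evensum_app nth_append_length)
qed

definition "INV l \<longleftrightarrow> (even l \<longrightarrow> Ev n k l * Pn n k \<le> (Od n k l + 1) * Qn n k \<and> (Od n k l + 1) * Qn n k \<le> (Ev n k l + 1) * Pn n k)
   \<and> (odd l \<longrightarrow> Od n k l * Qn n k \<le> (Ev n k l + 1) * Pn n k \<and> (Ev n k l + 1) * Pn n k \<le> (Od n k l + 1) * Qn n k)"

lemma stepfacts:
  assumes lt: "Od n k l + Ev n k l < n" and hi: "INV l"
  shows "1 \<le> dlist n k (Suc l) ! Suc l"
    "Od n k (Suc l) + Ev n k (Suc l) \<le> n"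
    "Od n k (Suc l) + Ev n k (Suc l) < n \<Longrightarrow> INV (Suc l)"
    "Od n k (Suc l) + Ev n k (Suc l) = n \<Longrightarrow>
      (even l \<longrightarrow> Od n k (Suc l) = Pn n k \<and> Ev n k (Suc l) = Qn n k - 1) \<and>
      (odd l \<longrightarrow> Ev n k (Suc l) = Qn n k \<and> Od n k (Suc l) = Pn n k - 1)"
proof -
  note pq = PQ[OF k1 kn]
  note st = step[OF k1 kn, of l]
  note os = OE_Suc[of l]
  note iv = hi[unfolded INV_def]
  have iv2: "INV (Suc l) \<longleftrightarrow> (even (Suc l) \<longrightarrow> Ev n k (Suc l) * Pn n k \<le> (Od n k (Suc l) + 1) * Qn n k \<and> (Od n k (Suc l) + 1) * Qn n k \<le> (Ev n k (Suc l) + 1) * Pn n k)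
   \<and> (odd (Suc l) \<longrightarrow> Od n k (Suc l) * Qn n k \<le> (Ev n k (Suc l) + 1) * Pn n k \<and> (Ev n k (Suc l) + 1) * Pn n k \<le> (Od n k (Suc l) + 1) * Qn n k)"
    unfolding INV_def ..
  define a where "a = Od n k l"
  define b where "b = Ev n k l"
  define d where "d = dlist n k (Suc l) ! Suc l"
  define P where "P = Pn n k"
  define Q where "Q = Qn n k"
  define a' where "a' = Od n k (Suc l)"
  define b' where "b' = Ev n k (Suc l)"
  have P0: "0 < P" and Q0: "0 < Q" and nPQ: "n + 1 = P + Q" using pq unfolding P_def Q_def by auto
  have lt': "a + b < n" using lt unfolding a_def b_def .
  have "(1 \<le> d \<and> a' + b' \<le> n) \<and>
    (a' + b' < n \<longrightarrow> ((even (Suc l) \<longrightarrow> b' * P \<le> (a' + 1) * Q \<and> (a' + 1) * Q \<le> (b' + 1) * P)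
   \<and> (odd (Suc l) \<longrightarrow> a' * Q \<le> (b' + 1) * P \<and> (b' + 1) * P \<le> (a' + 1) * Q))) \<and>
    (a' + b' = n \<longrightarrow>
      (even l \<longrightarrow> a' = P \<and> b' = Q - 1) \<and> (odd l \<longrightarrow> b' = Q \<and> a' = P - 1))"
  proof (cases "even l")
    case True
    have t: "d = min (n - (a + b)) ((b + 1) * P div Q - a)"
      using st True unfolding a_def b_def d_def P_def Q_def by simp
    have h1: "b * P \<le> (a + 1) * Q" "(a + 1) * Q \<le> (b + 1) * P"
      using iv True lt unfolding a_def b_def P_def Q_def by auto
    note g = gstep[OF Q0 lt' h1 refl t]
    have e: "a' = a + d" "b' = b" using os True unfolding a'_def b'_def a_def b_def d_def by auto
    show ?thesis using g e True nPQ by auto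
  next
    case False
    have t: "d = min (n - (b + a)) ((a + 1) * Q div P - b)"
      using st False unfolding a_def b_def d_def P_def Q_def by (simp add: add.commute)
    have h1: "a * Q \<le> (b + 1) * P" "(b + 1) * P \<le> (a + 1) * Q"
      using iv False lt unfolding a_def b_def P_def Q_def by auto
    have lt'': "b + a < n" using lt' by simp
    note g = gstep[OF P0 lt'' h1 refl t]
    have e: "b' = b + d" "a' = a" using os False unfolding a'_def b'_def a_def b_def d_def by auto
    have nQP: "n + 1 = Q + P" using nPQ by simp
    show ?thesis using g e False nQP by auto
  qed
  then show "1 \<le> dlist n k (Suc l) ! Suc l"
    "Od n k (Suc l) + Ev n k (Suc l) \<le> n"
    "Od n k (Suc l) + Ev n k (Suc l) < n \<Longrightarrow> INV (Suc l)"
    "Od n k (Suc l) + Ev n k (Suc l) = n \<Longrightarrow>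
      (even l \<longrightarrow> Od n k (Suc l) = Pn n k \<and> Ev n k (Suc l) = Qn n k - 1) \<and>
      (odd l \<longrightarrow> Ev n k (Suc l) = Qn n k \<and> Od n k (Suc l) = Pn n k - 1)"
    unfolding iv2 a'_def b'_def d_def P_def Q_def by auto
qed

lemma invl: "Od n k l + Ev n k l \<le> n \<and> (Od n k l + Ev n k l < n \<longrightarrow> INV l)"
proof (induction l)
  case 0 then show ?case using PQ[OF k1 kn] unfolding INV_def by simp
next
  case (Suc l)
  show ?case
  proof (cases "Od n k l + Ev n k l < n")
    case True
    then show ?thesis using Suc stepfacts[of l] by auto
  next
    case False
    then have "Od n k l + Ev n k l = n" using Suc by simp
    then have "dlist n k (Suc l) ! Suc l = 0" using step[OF k1 kn, of l] by simp
    then show ?thesis using OE_Suc[of l] Suc False by simp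
  qed
qed

end
lemma An_inj_aux:
  fixes a b c a' b' c' n :: nat
  assumes e1: "a + b + n * c = a' + b' + n * c'" and e2: "b + (n + 1) * c = b' + (n + 1) * c'"
    and s: "a + b + c \<le> n" and s': "a' + b' + c' \<le> n" and lt: "c < c'"
  shows False
proof -
  have "(n + 1) * (c + 1) \<le> (n + 1) * c'" using lt by (intro mult_le_mono2) simp
  then have "(n + 1) * c + (n + 1) \<le> (n + 1) * c'" by (simp add: algebra_simps)
  then have "b \<ge> b' + (n + 1)" using e2 by linarith
  then show False using s by linarith
qed

lemma An_inj: "\<beta> \<in> Lambda3 n \<Longrightarrow> \<beta>' \<in> Lambda3 n \<Longrightarrow> An n \<beta> = An n \<beta>' \<Longrightarrow> \<beta> = \<beta>'"
proof -
  assume h: "\<beta> \<in> Lambda3 n" "\<beta>' \<in> Lambda3 n" "An n \<beta> = An n \<beta>'"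
  obtain a b c where b1: "\<beta> = (a, b, c)" by (cases \<beta>) auto
  obtain a' b' c' where b2: "\<beta>' = (a', b', c')" by (cases \<beta>') auto
  have "(int (a + b + n * c), int (b + (n + 1) * c)) = (int (a' + b' + n * c'), int (b' + (n + 1) * c'))"
    using h(3) unfolding b1 b2 An_def by simp
  then have e1: "a + b + n * c = a' + b' + n * c'" and e2: "b + (n + 1) * c = b' + (n + 1) * c'"
    by (simp_all only: prod.inject of_nat_eq_iff)
  have s: "a + b + c \<le> n" "a' + b' + c' \<le> n" using h(1,2) unfolding b1 b2 Lambda3_def by auto
  have "c = c'"
  proof (rule ccontr)
    assume "c \<noteq> c'"
    then have "c < c' \<or> c' < c" by auto
    then show False
      using An_inj_aux[OF e1 e2 s] An_inj_aux[OF e1[symmetric] e2[symmetric] s(2) s(1)] by blast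
  qed
  then show ?thesis using e1 e2 unfolding b1 b2 by simp
qed

lemma Lambda3_finite: "finite (Lambda3 n)"
proof -
  have "Lambda3 n \<subseteq> {..n} \<times> {..n} \<times> {..n}" unfolding Lambda3_def by auto
  then show ?thesis by (rule finite_subset) simp
qed

lemma fk_mJ: "finite J \<Longrightarrow> fk k (mJ n J) = (\<Sum>\<beta>\<in>J. fk k (An n \<beta>))"
  unfolding fk_def mJ_def by (simp add: sum_distrib_left sum.distrib)

definition sh :: "nat \<Rightarrow> int \<times> int \<Rightarrow> int \<times> int" where
  "sh n v = (fst v + int n * snd v, snd v + int n * snd v)"

definition sd :: "int \<times> int \<Rightarrow> int" where "sd v = snd v - fst v"

definition VT :: "nat \<Rightarrow> (int \<times> int) set" where
  "VT n = {(int x, 0) | x. 1 \<le> x \<and> x \<le> n} \<union> {(0, int y) | y. 1 \<le> y \<and> y \<le> n}"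

definition Rest :: "nat \<Rightarrow> nat \<times> nat list \<Rightarrow> (int \<times> int) set" where
  "Rest n \<eta> = T0 n \<union> (\<Union>j\<in>{1..<n}. (\<lambda>x. (fst x + rje n j \<eta>, snd x + rje n j \<eta>)) ` Tj n j \<eta>)"

lemma Tprime_split: "1 \<le> n \<Longrightarrow> Tprime n \<eta> = Rest n \<eta> \<union> {sh n (vje n \<eta>)}"
proof -
  assume n1: "1 \<le> n"
  have "{1..n} = insert n {1..<n}" using n1 by auto
  moreover have "Tj n n \<eta> = {vje n \<eta>}" unfolding Tj_def by auto
  ultimately show ?thesis unfolding Tprime_def Rest_def sh_def rje_def by auto
qed

lemma Rest_sd: "x \<in> Rest n \<eta> \<Longrightarrow> sd x = 0 \<or> (\<exists>j\<in>{1..<n}. sd x = sd (vje j \<eta>))"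
  unfolding Rest_def T0_def Tj_def sd_def rje_def by auto

lemma sd_sh[simp]: "sd (sh n v) = sd v" unfolding sd_def sh_def by simp

lemma Jeta_split:
  assumes n1: "1 \<le> n" and v: "vje n \<eta> \<in> VT n" and nr: "sh n (vje n \<eta>) \<notin> Rest n \<eta>"
  shows "fk k (mJ n (Jeta n \<eta>)) = (\<Sum>\<beta>\<in>{\<beta> \<in> Lambda3 n. An n \<beta> \<in> Rest n \<eta>}. fk k (An n \<beta>)) + fk k (sh n (vje n \<eta>))"
proof -
  obtain \<beta>0 where b0: "\<beta>0 \<in> Lambda3 n" "An n \<beta>0 = sh n (vje n \<eta>)"
  proof -
    from v consider (x) x where "vje n \<eta> = (int x, 0)" "1 \<le> x" "x \<le> n"
      | (y) y where "vje n \<eta> = (0, int y)" "1 \<le> y" "y \<le> n" unfolding VT_def by auto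
    then show ?thesis
    proof cases
      case x then show ?thesis using that[of "(x, 0, 0)"] unfolding Lambda3_def An_def sh_def by auto
    next
      case y
      have "An n (0, 0, y) = (int n * int y, int y + int n * int y)" unfolding An_def
        by (simp add: algebra_simps)
      moreover have "(0, 0, y) \<in> Lambda3 n" using y unfolding Lambda3_def by simp
      ultimately show ?thesis using that[of "(0, 0, y)"] y unfolding sh_def by simp
    qed
  qed
  have J: "Jeta n \<eta> = insert \<beta>0 {\<beta> \<in> Lambda3 n. An n \<beta> \<in> Rest n \<eta>}"
  proof -
    have "\<beta> = \<beta>0" if "\<beta> \<in> Lambda3 n" "An n \<beta> = sh n (vje n \<eta>)" for \<beta>
      using An_inj[OF that(1) b0(1)] that(2) b0(2) by simp
    then show ?thesis unfolding Jeta_def Tprime_split[OF n1] using b0 by blast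
  qed
  have nin: "\<beta>0 \<notin> {\<beta> \<in> Lambda3 n. An n \<beta> \<in> Rest n \<eta>}" using b0 nr by auto
  have fin: "finite {\<beta> \<in> Lambda3 n. An n \<beta> \<in> Rest n \<eta>}" using Lambda3_finite by simp
  have fin2: "finite (insert \<beta>0 {\<beta> \<in> Lambda3 n. An n \<beta> \<in> Rest n \<eta>})" using fin by simp
  show ?thesis unfolding J fk_mJ[OF fin2] sum.insert[OF fin nin] b0(2) by simp
qed

lemma G:
  assumes n1: "1 \<le> n"
    and eq: "\<And>j. 1 \<le> j \<Longrightarrow> j < n \<Longrightarrow> vje j \<eta>' = vje j \<eta>"
    and v1: "vje n \<eta> \<in> VT n" and v2: "vje n \<eta>' \<in> VT n"
    and d1: "sd (vje n \<eta>) \<noteq> 0" and d2: "sd (vje n \<eta>') \<noteq> 0"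
    and d3: "\<And>j. 1 \<le> j \<Longrightarrow> j < n \<Longrightarrow> sd (vje j \<eta>) \<noteq> sd (vje n \<eta>) \<and> sd (vje j \<eta>) \<noteq> sd (vje n \<eta>')"
    and f: "fk k (sh n (vje n \<eta>)) = fk k (sh n (vje n \<eta>'))"
  shows "fk k (mJ n (Jeta n \<eta>')) = fk k (mJ n (Jeta n \<eta>))"
proof -
  have R: "Rest n \<eta>' = Rest n \<eta>"
  proof -
    have "Tj n j \<eta>' = Tj n j \<eta> \<and> rje n j \<eta>' = rje n j \<eta>" if "j \<in> {1..<n}" for j
      using eq[of j] that unfolding Tj_def rje_def by auto
    then show ?thesis unfolding Rest_def by (intro arg_cong2[where f="(\<union>)"] refl SUP_cong) auto
  qed
  have nr1: "sh n (vje n \<eta>) \<notin> Rest n \<eta>"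
  proof
    assume "sh n (vje n \<eta>) \<in> Rest n \<eta>"
    from Rest_sd[OF this] d1 obtain j where "j \<in> {1..<n}" "sd (vje n \<eta>) = sd (vje j \<eta>)" by auto
    then show False using d3[of j] by auto
  qed
  have nr2: "sh n (vje n \<eta>') \<notin> Rest n \<eta>'"
  proof
    assume "sh n (vje n \<eta>') \<in> Rest n \<eta>'"
    from Rest_sd[OF this[unfolded R]] d2 obtain j where "j \<in> {1..<n}" "sd (vje n \<eta>') = sd (vje j \<eta>)" by auto
    then show False using d3[of j] by auto
  qed
  have a1: "fk k (mJ n (Jeta n \<eta>)) = (\<Sum>\<beta>\<in>{\<beta> \<in> Lambda3 n. An n \<beta> \<in> Rest n \<eta>}. fk k (An n \<beta>)) + fk k (sh n (vje n \<eta>))"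
    by (rule Jeta_split[OF n1 v1 nr1])
  have a2: "fk k (mJ n (Jeta n \<eta>')) = (\<Sum>\<beta>\<in>{\<beta> \<in> Lambda3 n. An n \<beta> \<in> Rest n \<eta>'}. fk k (An n \<beta>)) + fk k (sh n (vje n \<eta>'))"
    by (rule Jeta_split[OF n1 v2 nr2])
  show ?thesis unfolding a1 a2 R f ..
qed


definition "RR n k = (LEAST r. Od n k r + Ev n k r = n)"

context
  fixes n k :: nat
  assumes k1: "1 \<le> k" and kn: "k \<le> n"
begin

lemma sum_ge: "min n l \<le> Od n k l + Ev n k l"
proof (induction l)
  case 0 then show ?case by simp
next
  case (Suc l)
  have s: "Od n k (Suc l) + Ev n k (Suc l) = Od n k l + Ev n k l + dlist n k (Suc l) ! Suc l"
    using OE_Suc[OF k1 kn, of l] by auto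
  show ?case
  proof (cases "Od n k l + Ev n k l < n")
    case True
    then have "1 \<le> dlist n k (Suc l) ! Suc l" using stepfacts(1)[OF k1 kn True] invl[OF k1 kn, of l] by auto
    then show ?thesis using s Suc by linarith
  next
    case False
    then show ?thesis using s by linarith
  qed
qed

lemma RR_props: "Od n k (RR n k) + Ev n k (RR n k) = n" "\<And>l. l < RR n k \<Longrightarrow> Od n k l + Ev n k l < n"
  "1 \<le> RR n k"
proof -
  have ex: "Od n k n + Ev n k n = n" using sum_ge[of n] invl[OF k1 kn, of n] by simp
  show a: "Od n k (RR n k) + Ev n k (RR n k) = n" unfolding RR_def by (rule LeastI[where P="\<lambda>r. Od n k r + Ev n k r = n", OF ex])
  show b: "\<And>l. l < RR n k \<Longrightarrow> Od n k l + Ev n k l < n"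
  proof -
    fix l assume "l < RR n k"
    then have "Od n k l + Ev n k l \<noteq> n" unfolding RR_def by (rule not_less_Least)
    then show "Od n k l + Ev n k l < n" using invl[OF k1 kn, of l] by simp
  qed
  show "1 \<le> RR n k"
  proof (rule ccontr)
    assume "\<not> 1 \<le> RR n k"
    then have "RR n k = 0" by simp
    then show False using a k1 kn by simp
  qed
qed

lemma RR_blocks: "1 \<le> i \<Longrightarrow> i \<le> RR n k \<Longrightarrow> 1 \<le> dlist n k (RR n k) ! i"
proof -
  assume i: "1 \<le> i" "i \<le> RR n k"
  have "dlist n k (RR n k) ! i = dlist n k i ! i" using dlist_prefix[of i i "RR n k"] i by simp
  moreover have "i = Suc (i - 1)" using i by simp
  moreover have "Od n k (i - 1) + Ev n k (i - 1) < n" using RR_props(2)[of "i - 1"] i by simp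
  ultimately show ?thesis using stepfacts(1)[OF k1 kn, of "i - 1"] invl[OF k1 kn, of "i - 1"] by auto
qed

lemma RR_final:
  "(odd (RR n k) \<longrightarrow> Od n k (RR n k) = Pn n k \<and> Ev n k (RR n k) = Qn n k - 1) \<and>
   (even (RR n k) \<longrightarrow> Ev n k (RR n k) = Qn n k \<and> Od n k (RR n k) = Pn n k - 1)"
proof -
  define l where "l = RR n k - 1"
  have R: "RR n k = Suc l" using RR_props(3) unfolding l_def by simp
  have lt: "Od n k l + Ev n k l < n" using RR_props(2)[of l] R by simp
  have "INV n k l" using invl[OF k1 kn, of l] lt by simp
  note sf = stepfacts(4)[OF k1 kn lt this]
  show ?thesis using sf RR_props(1) unfolding R by auto
qed

lemma sumdk: "(\<Sum>j\<le>r. dk n k j) = Od n k r + Ev n k r"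
proof -
  have "(\<Sum>j\<le>r. dk n k j) = (\<Sum>j<Suc r. dlist n k r ! j)"
    unfolding dk_def lessThan_Suc_atMost by (rule sum.cong) (auto, metis dlist_prefix order_refl)
  also have "\<dots> = psum (dlist n k r) (Suc r)" unfolding psum_def ..
  finally show ?thesis unfolding psum_split Od_def Ev_def .
qed

lemma rk_RR: "rk n k = RR n k"
  unfolding rk_def RR_def sumdk ..

lemma etak_eq: "etak n k = (zk n k, dlist n k (RR n k))"
proof -
  have "map (dk n k) [0..<Suc (RR n k)] = dlist n k (RR n k)"
  proof (rule nth_equalityI)
    show "length (map (dk n k) [0..<Suc (RR n k)]) = length (dlist n k (RR n k))" by (simp add: dlist_len)
    fix i assume "i < length (map (dk n k) [0..<Suc (RR n k)])"
    then have "i \<le> RR n k" by simp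
    then show "map (dk n k) [0..<Suc (RR n k)] ! i = dlist n k (RR n k) ! i"
      unfolding dk_def using dlist_prefix[of i i "RR n k"] by (simp del: upt_Suc)
  qed
  then show ?thesis unfolding etak_def rk_RR by simp
qed

end

lemma psum_mono: "a \<le> b \<Longrightarrow> psum ds a \<le> psum ds b"
  unfolding psum_def by (rule sum_mono2) auto

lemma tidx_eq:
  assumes "t < length ds" "psum ds t < j" "j \<le> psum ds (Suc t)"
  shows "tidx ds j = t"
  unfolding tidx_def
proof (rule the_equality)
  show "t < length ds \<and> psum ds t < j \<and> j \<le> psum ds (Suc t)" using assms by simp
  fix t' assume h: "t' < length ds \<and> psum ds t' < j \<and> j \<le> psum ds (Suc t')"
  show "t' = t"
  proof (rule ccontr)
    assume "t' \<noteq> t"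
    then have "Suc t' \<le> t \<or> Suc t \<le> t'" by auto
    then show False
    proof
      assume "Suc t' \<le> t"
      then have "psum ds (Suc t') \<le> psum ds t" by (rule psum_mono)
      then show False using h assms by linarith
    next
      assume "Suc t \<le> t'"
      then have "psum ds (Suc t) \<le> psum ds t'" by (rule psum_mono)
      then show False using h assms by linarith
    qed
  qed
qed

lemma tidx_ex:
  assumes "1 \<le> j" "j \<le> psum ds (length ds)"
  shows "\<exists>t < length ds. psum ds t < j \<and> j \<le> psum ds (Suc t)"
proof -
  define m where "m = (LEAST m. j \<le> psum ds m)"
  have m1: "j \<le> psum ds m" unfolding m_def by (rule LeastI[of _ "length ds"]) (rule assms(2))
  have m2: "m \<le> length ds" unfolding m_def by (rule Least_le) (rule assms(2))
  have "m \<noteq> 0"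
  proof
    assume "m = 0" then show False using m1 assms(1) by simp
  qed
  then obtain t where t: "m = Suc t" by (cases m) auto
  have "\<not> j \<le> psum ds t" unfolding m_def by (rule not_less_Least) (simp add: m_def[symmetric] t)
  then show ?thesis using t m1 m2 by (intro exI[of _ t]) auto
qed

definition Sp :: "nat list \<Rightarrow> bool \<Rightarrow> nat \<Rightarrow> nat" where
  "Sp ds p t = (if p then oddsum ds t else evensum ds t)"

lemma Sp_Suc: "Sp ds p (Suc t) = Sp ds p t + (if p = odd t then ds ! t else 0)"
  unfolding Sp_def by (auto simp: oddsum_Suc evensum_Suc)

lemma Sp_mono: "a \<le> b \<Longrightarrow> Sp ds p a \<le> Sp ds p b"
proof (induction b rule: dec_induct)
  case base then show ?case by simp
next
  case (step b) then show ?case using Sp_Suc[of ds p b] by simp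
qed

lemma Sp_psum: "Sp ds True t + Sp ds False t = psum ds t"
  unfolding Sp_def psum_split by simp

definition cor :: "nat list \<Rightarrow> nat \<Rightarrow> nat" where
  "cor ds j = Sp ds (odd (tidx ds j)) (tidx ds j) + (j - psum ds (tidx ds j))"

lemma vje_cor: "z \<in> {0, 1} \<Longrightarrow> vje j (z, ds) =
   (if (z = 1) = odd (tidx ds j) then (int (cor ds j), 0) else (0, int (cor ds j)))"
  unfolding vje_def cor_def Sp_def Let_def by auto

definition shp :: "nat list \<Rightarrow> nat \<Rightarrow> nat \<Rightarrow> bool" where
  "shp ds r n \<longleftrightarrow> length ds = Suc r \<and> 1 \<le> r \<and> ds ! 0 = 0 \<and> (\<forall>i. 1 \<le> i \<and> i \<le> r \<longrightarrow> 1 \<le> ds ! i)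
     \<and> psum ds (Suc r) = n"

lemma cor_bounds:
  assumes sh: "shp ds r n" and j: "1 \<le> j" "j < n"
  shows "tidx ds j \<le> r" "psum ds (tidx ds j) < j" "j \<le> psum ds (Suc (tidx ds j))" "1 \<le> cor ds j"
    "odd (tidx ds j) = odd r \<Longrightarrow> cor ds j < Sp ds (odd r) (Suc r)"
    "odd (tidx ds j) \<noteq> odd r \<Longrightarrow> cor ds j \<le> Sp ds (odd (tidx ds j)) (Suc r)"
proof -
  have L: "length ds = Suc r" and n: "psum ds (Suc r) = n" and r1: "1 \<le> r"
    and bl: "\<And>i. 1 \<le> i \<Longrightarrow> i \<le> r \<Longrightarrow> 1 \<le> ds ! i" using sh unfolding shp_def by auto
  obtain t where t: "t < Suc r" "psum ds t < j" "j \<le> psum ds (Suc t)"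
    using tidx_ex[of j ds] j n L by auto
  have T: "tidx ds j = t" using tidx_eq[of t ds j] t L by simp
  show "tidx ds j \<le> r" "psum ds (tidx ds j) < j" "j \<le> psum ds (Suc (tidx ds j))" using T t by auto
  define c where "c = j - psum ds t"
  have c1: "1 \<le> c" "c \<le> ds ! t" using t psum_Suc[of ds t] unfolding c_def by auto
  have cr: "cor ds j = Sp ds (odd t) t + c" unfolding cor_def T c_def ..
  have st: "Sp ds (odd t) (Suc t) = Sp ds (odd t) t + ds ! t" using Sp_Suc[of ds "odd t" t] by simp
  show "1 \<le> cor ds j" using cr c1 by simp
  have le: "cor ds j \<le> Sp ds (odd t) (Suc r)"
    using cr c1 st Sp_mono[of "Suc t" "Suc r" ds "odd t"] t by simp
  show "odd (tidx ds j) \<noteq> odd r \<Longrightarrow> cor ds j \<le> Sp ds (odd (tidx ds j)) (Suc r)" using le T by simp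
  show "odd (tidx ds j) = odd r \<Longrightarrow> cor ds j < Sp ds (odd r) (Suc r)"
  proof -
    assume par: "odd (tidx ds j) = odd r"
    then have par': "odd t = odd r" using T by simp
    have sr: "Sp ds (odd r) (Suc r) = Sp ds (odd r) r + ds ! r" using Sp_Suc[of ds "odd r" r] by simp
    have dr: "1 \<le> ds ! r" using bl r1 by simp
    show ?thesis
    proof (cases "t = r")
      case True
      have "psum ds (Suc r) = psum ds r + ds ! r" by (rule psum_Suc)
      then have "j < psum ds r + ds ! r" using j n by simp
      then have "j - psum ds r < ds ! r" using dr by arith
      then have "c < ds ! r" unfolding c_def True .
      then show ?thesis using cr sr True by simp
    next
      case False
      then have "Suc t \<le> r" using t by simp
      then have "Sp ds (odd r) (Suc t) \<le> Sp ds (odd r) r" by (rule Sp_mono)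
      then show ?thesis using cr c1 st par' sr dr by simp
    qed
  qed
qed

lemma cor_n:
  assumes sh: "shp ds r n"
  shows "tidx ds n = r" "cor ds n = Sp ds (odd r) (Suc r)"
proof -
  have L: "length ds = Suc r" and n: "psum ds (Suc r) = n" and r1: "1 \<le> r"
    and bl: "\<And>i. 1 \<le> i \<Longrightarrow> i \<le> r \<Longrightarrow> 1 \<le> ds ! i" using sh unfolding shp_def by auto
  have ps: "psum ds (Suc r) = psum ds r + ds ! r" by (rule psum_Suc)
  have dr: "1 \<le> ds ! r" using bl r1 by simp
  show T: "tidx ds n = r" using tidx_eq[of r ds n] L n ps dr by simp
  show "cor ds n = Sp ds (odd r) (Suc r)" unfolding cor_def T using Sp_Suc[of ds "odd r" r] ps n by simp
qed


lemma fk_sh_x: "fk k (sh n (x, 0)) = int k * x"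
  unfolding fk_def sh_def by simp

lemma fk_sh_y: "fk k (sh n (0, y)) = y * (int n + 1 - int k)"
  unfolding fk_def sh_def by (simp add: algebra_simps)

lemma shp_n1: "shp ds r n \<Longrightarrow> 1 \<le> n"
proof -
  assume sh: "shp ds r n"
  then have "1 \<le> ds ! r" "psum ds (Suc r) = n" "1 \<le> r" unfolding shp_def by auto
  then show ?thesis using psum_Suc[of ds r] by simp
qed

lemma shp_sums:
  assumes sh: "shp ds r n"
  shows "Sp ds (odd r) (Suc r) + Sp ds (\<not> odd r) (Suc r) = n" "1 \<le> Sp ds (odd r) (Suc r)"
proof -
  have n: "psum ds (Suc r) = n" and "1 \<le> ds ! r" using sh unfolding shp_def by auto
  show "Sp ds (odd r) (Suc r) + Sp ds (\<not> odd r) (Suc r) = n"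
    using Sp_psum[of ds "Suc r"] n by (cases "odd r") auto
  show "1 \<le> Sp ds (odd r) (Suc r)" using Sp_Suc[of ds "odd r" r] \<open>1 \<le> ds ! r\<close> by simp
qed

lemma mainG:
  assumes sh: "shp ds r n" and z: "z \<in> {0, 1}"
    and eq: "\<And>j. 1 \<le> j \<Longrightarrow> j < n \<Longrightarrow> vje j \<eta>' = vje j (z, ds)"
    and new: "vje n \<eta>' = (if (z = 1) = odd r then (0, int (Sp ds (\<not> odd r) (Suc r) + 1))
                 else (int (Sp ds (\<not> odd r) (Suc r) + 1), 0))"
    and f: "fk k (sh n (vje n (z, ds))) = fk k (sh n (vje n \<eta>'))"
  shows "fk k (mJ n (Jeta n \<eta>')) = fk k (mJ n (Jeta n (z, ds)))"
proof -
  define Sr where "Sr = Sp ds (odd r) (Suc r)"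
  define So where "So = Sp ds (\<not> odd r) (Suc r)"
  define xr where "xr = ((z = 1) = odd r)"
  have n1: "1 \<le> n" by (rule shp_n1[OF sh])
  have ss: "Sr + So = n" "1 \<le> Sr" using shp_sums[OF sh] unfolding Sr_def So_def by auto
  have old: "vje n (z, ds) = (if xr then (int Sr, 0) else (0, int Sr))"
    using vje_cor[OF z, of n ds] cor_n[OF sh] unfolding xr_def Sr_def by simp
  have new': "vje n \<eta>' = (if xr then (0, int (So + 1)) else (int (So + 1), 0))"
    using new unfolding xr_def So_def by simp
  show ?thesis
  proof (rule G[OF n1 eq])
    show "vje n (z, ds) \<in> VT n" unfolding old VT_def using ss by auto
    have a: "1 \<le> So + 1" "So + 1 \<le> n" using ss by auto
    have m1: "(0, int (So + 1)) \<in> VT n" unfolding VT_def using a by blast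
    have m2: "(int (So + 1), 0) \<in> VT n" unfolding VT_def using a by blast
    show "vje n \<eta>' \<in> VT n" unfolding new' using m1 m2 by simp
    show "sd (vje n (z, ds)) \<noteq> 0" unfolding old sd_def using ss by auto
    show "sd (vje n \<eta>') \<noteq> 0" unfolding new' sd_def by auto
    show "fk k (sh n (vje n (z, ds))) = fk k (sh n (vje n \<eta>'))" by (rule f)
    fix j assume j: "1 \<le> j" "j < n"
    define t where "t = tidx ds j"
    have vj: "vje j (z, ds) = (if (z = 1) = odd t then (int (cor ds j), 0) else (0, int (cor ds j)))"
      using vje_cor[OF z, of j ds] unfolding t_def by simp
    note cb = cor_bounds[OF sh j, folded t_def]
    show "sd (vje j (z, ds)) \<noteq> sd (vje n (z, ds)) \<and> sd (vje j (z, ds)) \<noteq> sd (vje n \<eta>')"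
    proof (cases "odd t = odd r")
      case True
      then have "cor ds j < Sr" using cb(5) unfolding Sr_def by simp
      then show ?thesis unfolding vj old new' sd_def xr_def using True cb(4) by auto
    next
      case False
      then have "cor ds j \<le> So" using cb(6) unfolding So_def by simp
      then show ?thesis unfolding vj old new' sd_def xr_def using False cb(4) ss by auto
    qed
  qed
qed

lemma agree:
  assumes "\<forall>i<m. ds' ! i = ds ! i" "t \<le> m"
  shows "psum ds' t = psum ds t" "Sp ds' p t = Sp ds p t"
proof -
  show "psum ds' t = psum ds t" unfolding psum_def using assms by (intro sum.cong) auto
  show "Sp ds' p t = Sp ds p t" unfolding Sp_def oddsum_def evensum_def using assms
    by (auto intro!: sum.cong)
qed

lemma caseA:
  assumes sh: "shp ds r n" and d2: "2 \<le> ds ! r" and z: "z \<in> {0, 1}"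
    and ds'_def: "ds' = take r ds @ [ds ! r - 1, 1]"
  shows "(z, ds') \<in> Omega n" "ds' \<noteq> ds"
    "\<And>j. 1 \<le> j \<Longrightarrow> j < n \<Longrightarrow> vje j (z, ds') = vje j (z, ds)"
    "vje n (z, ds') = (if (z = 1) = odd r then (0, int (Sp ds (\<not> odd r) (Suc r) + 1))
                 else (int (Sp ds (\<not> odd r) (Suc r) + 1), 0))"
proof -
  have L: "length ds = Suc r" and n: "psum ds (Suc r) = n" and r1: "1 \<le> r" and d0: "ds ! 0 = 0"
    and bl: "\<And>i. 1 \<le> i \<Longrightarrow> i \<le> r \<Longrightarrow> 1 \<le> ds ! i" using sh unfolding shp_def by auto
  have L': "length ds' = Suc (Suc r)" unfolding ds'_def using L by simp
  have nth1: "\<And>i. i < r \<Longrightarrow> ds' ! i = ds ! i" unfolding ds'_def using L by (simp add: nth_append)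
  have nthA: "\<forall>i<r. ds' ! i = ds ! i" using nth1 by blast
  have nth2: "ds' ! r = ds ! r - 1" "ds' ! Suc r = 1" unfolding ds'_def using L by (simp_all add: nth_append)
  have pr: "psum ds (Suc r) = psum ds r + ds ! r" by (rule psum_Suc)
  have p1: "psum ds' r = psum ds r" by (rule agree(1)[OF nthA order_refl])
  have p2: "psum ds' (Suc r) = n - 1" using psum_Suc[of ds' r] p1 nth2 pr n d2 by simp
  have p3: "psum ds' (Suc (Suc r)) = n" using psum_Suc[of ds' "Suc r"] p2 nth2 pr n d2 by simp
  show "(z, ds') \<in> Omega n"
    unfolding Omega_def
  proof (intro CollectI case_prodI conjI allI impI)
    show "z \<in> {0, 1}" by (rule z)
    show "ds' \<noteq> []" using L' by auto
    show "ds' ! 0 = 0" using nth1[of 0] r1 d0 by simp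
    show "sum_list ds' = n" unfolding sum_list_psum L' by (rule p3)
    fix i assume i: "1 \<le> i \<and> i < length ds'"
    show "1 \<le> ds' ! i"
    proof -
      consider "i < r" | "i = r" | "i = Suc r" using i L' by linarith
      then show ?thesis
      proof cases
        case 1 then show ?thesis using nth1 bl i by simp
      next
        case 2 then show ?thesis using nth2 d2 by simp
      next
        case 3 then show ?thesis using nth2 by simp
      qed
    qed
  qed
  show "ds' \<noteq> ds" using L L' by auto
  show "\<And>j. 1 \<le> j \<Longrightarrow> j < n \<Longrightarrow> vje j (z, ds') = vje j (z, ds)"
  proof -
    fix j assume j: "1 \<le> j" "j < n"
    define t where "t = tidx ds j"
    note cb = cor_bounds[OF sh j, folded t_def]
    have pt: "psum ds' t = psum ds t" using agree(1)[OF nthA] cb(1) .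
    have spt: "Sp ds' p t = Sp ds p t" for p using agree(2)[OF nthA] cb(1) .
    have "j \<le> psum ds' (Suc t)"
    proof (cases "t = r")
      case True then show ?thesis using p2 j by simp
    next
      case False then have "Suc t \<le> r" using cb(1) by simp
      then show ?thesis using agree(1)[OF nthA, of "Suc t"] cb(3) by simp
    qed
    then have T: "tidx ds' j = t" using tidx_eq[of t ds' j] L' cb(1,2) pt by simp
    have "cor ds' j = cor ds j" unfolding cor_def T t_def[symmetric] pt spt ..
    then show "vje j (z, ds') = vje j (z, ds)" unfolding vje_cor[OF z] T t_def by simp
  qed
  have T: "tidx ds' n = Suc r" using tidx_eq[of "Suc r" ds' n] L' p2 p3 shp_n1[OF sh] by simp
  have sp: "Sp ds' (odd (Suc r)) (Suc r) = Sp ds (\<not> odd r) (Suc r)"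
    using Sp_Suc[of ds' "odd (Suc r)" r] Sp_Suc[of ds "odd (Suc r)" r] agree(2)[OF nthA order_refl]
    by simp
  have C: "cor ds' n = Sp ds (\<not> odd r) (Suc r) + 1"
    unfolding cor_def T sp p2 using shp_n1[OF sh] by simp
  show "vje n (z, ds') = (if (z = 1) = odd r then (0, int (Sp ds (\<not> odd r) (Suc r) + 1))
                 else (int (Sp ds (\<not> odd r) (Suc r) + 1), 0))"
    unfolding vje_cor[OF z] T C by auto
qed


lemma caseB:
  assumes sh: "shp ds r n" and d1: "ds ! r = 1" and r2: "2 \<le> r" and z: "z \<in> {0, 1}"
    and ds'_def: "ds' = take (r - 1) ds @ [ds ! (r - 1) + 1]"
  shows "(z, ds') \<in> Omega n" "ds' \<noteq> ds"
    "\<And>j. 1 \<le> j \<Longrightarrow> j < n \<Longrightarrow> vje j (z, ds') = vje j (z, ds)"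
    "vje n (z, ds') = (if (z = 1) = odd r then (0, int (Sp ds (\<not> odd r) (Suc r) + 1))
                 else (int (Sp ds (\<not> odd r) (Suc r) + 1), 0))"
proof -
  define q where "q = r - 1"
  have rq: "r = Suc q" and q1: "1 \<le> q" using r2 unfolding q_def by auto
  have L: "length ds = Suc r" and n: "psum ds (Suc r) = n" and r1: "1 \<le> r" and d0: "ds ! 0 = 0"
    and bl: "\<And>i. 1 \<le> i \<Longrightarrow> i \<le> r \<Longrightarrow> 1 \<le> ds ! i" using sh unfolding shp_def by auto
  have ds': "ds' = take q ds @ [ds ! q + 1]" unfolding ds'_def q_def ..
  have L': "length ds' = Suc q" unfolding ds' using L rq by simp
  have nth1: "\<And>i. i < q \<Longrightarrow> ds' ! i = ds ! i" unfolding ds' using L rq by (simp add: nth_append)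
  have nthA: "\<forall>i<q. ds' ! i = ds ! i" using nth1 by blast
  have nth2: "ds' ! q = ds ! q + 1" unfolding ds' using L rq by (simp add: nth_append)
  have pr: "psum ds (Suc (Suc q)) = psum ds (Suc q) + 1" using psum_Suc[of ds "Suc q"] d1 rq by simp
  have pq: "psum ds (Suc q) = psum ds q + ds ! q" by (rule psum_Suc)
  have pSq: "psum ds (Suc q) = n - 1" using pr n rq by simp
  have n1: "1 \<le> n" by (rule shp_n1[OF sh])
  have p1: "psum ds' q = psum ds q" by (rule agree(1)[OF nthA order_refl])
  have p3: "psum ds' (Suc q) = n" using psum_Suc[of ds' q] p1 nth2 pq pSq n1 by simp
  show "(z, ds') \<in> Omega n"
    unfolding Omega_def
  proof (intro CollectI case_prodI conjI allI impI)
    show "z \<in> {0, 1}" by (rule z)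
    show "ds' \<noteq> []" using L' by auto
    show "ds' ! 0 = 0" using nth1[of 0] q1 d0 by simp
    show "sum_list ds' = n" unfolding sum_list_psum L' by (rule p3)
    fix i assume i: "1 \<le> i \<and> i < length ds'"
    show "1 \<le> ds' ! i"
    proof -
      consider "i < q" | "i = q" using i L' by linarith
      then show ?thesis
      proof cases
        case 1 then show ?thesis using nth1 bl i rq by simp
      next
        case 2 then show ?thesis using nth2 by simp
      qed
    qed
  qed
  show "ds' \<noteq> ds" using L L' rq by auto
  show "\<And>j. 1 \<le> j \<Longrightarrow> j < n \<Longrightarrow> vje j (z, ds') = vje j (z, ds)"
  proof -
    fix j assume j: "1 \<le> j" "j < n"
    define t where "t = tidx ds j"
    note cb = cor_bounds[OF sh j, folded t_def]
    have "t \<noteq> r"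
    proof
      assume "t = r"
      then have "psum ds (Suc q) < j" using cb(2) rq by simp
      then show False using pSq j by simp
    qed
    then have tq: "t \<le> q" using cb(1) rq by simp
    have pt: "psum ds' t = psum ds t" using agree(1)[OF nthA] tq .
    have spt: "Sp ds' p t = Sp ds p t" for p using agree(2)[OF nthA] tq .
    have "j \<le> psum ds' (Suc t)"
    proof (cases "t = q")
      case True then show ?thesis using p3 j by simp
    next
      case False then have "Suc t \<le> q" using tq by simp
      then show ?thesis using agree(1)[OF nthA, of "Suc t"] cb(3) by simp
    qed
    then have T: "tidx ds' j = t" using tidx_eq[of t ds' j] L' tq cb(2) pt by simp
    have "cor ds' j = cor ds j" unfolding cor_def T t_def[symmetric] pt spt ..
    then show "vje j (z, ds') = vje j (z, ds)" unfolding vje_cor[OF z] T t_def by simp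
  qed
  have T: "tidx ds' n = q" using tidx_eq[of q ds' n] L' p1 p3 pq pSq n1 by simp
  have sp: "Sp ds (odd q) (Suc (Suc q)) = Sp ds (odd q) q + ds ! q"
    using Sp_Suc[of ds "odd q" "Suc q"] Sp_Suc[of ds "odd q" q] by simp
  have C: "cor ds' n = Sp ds (\<not> odd r) (Suc r) + 1"
    unfolding cor_def T p1 agree(2)[OF nthA order_refl] using sp rq pq pSq n1 by simp
  show "vje n (z, ds') = (if (z = 1) = odd r then (0, int (Sp ds (\<not> odd r) (Suc r) + 1))
                 else (int (Sp ds (\<not> odd r) (Suc r) + 1), 0))"
    unfolding vje_cor[OF z] T C rq by auto
qed

lemma caseC:
  assumes sh: "shp ds r n" and d1: "ds ! r = 1" and r1: "r = 1" and z: "z \<in> {0, 1}"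
  shows "(1 - z, ds) \<in> Omega n" "1 - z \<noteq> z" "n = 1"
    "vje n (1 - z, ds) = (if (z = 1) = odd r then (0, int (Sp ds (\<not> odd r) (Suc r) + 1))
                 else (int (Sp ds (\<not> odd r) (Suc r) + 1), 0))"
proof -
  have L: "length ds = Suc r" and n: "psum ds (Suc r) = n" and d0: "ds ! 0 = 0"
    using sh unfolding shp_def by auto
  have z': "1 - z \<in> {0, 1}" using z by auto
  show n1: "n = 1" using n d1 d0 r1 by (simp add: psum_Suc)
  show "1 - z \<noteq> z" using z by auto
  show "(1 - z, ds) \<in> Omega n"
    unfolding Omega_def using z' L d0 d1 r1 n1 n
    by (auto simp: sum_list_psum less_Suc_eq)
  have T: "tidx ds n = r" "cor ds n = Sp ds (odd r) (Suc r)" using cor_n[OF sh] by auto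
  have s1: "Sp ds (odd r) (Suc r) = 1" "Sp ds (\<not> odd r) (Suc r) = 0"
    using r1 d0 d1 by (simp_all add: Sp_def oddsum_Suc evensum_Suc)
  show "vje n (1 - z, ds) = (if (z = 1) = odd r then (0, int (Sp ds (\<not> odd r) (Suc r) + 1))
                 else (int (Sp ds (\<not> odd r) (Suc r) + 1), 0))"
    unfolding vje_cor[OF z'] T s1 using z r1 by auto
qed


theorem corollary3p9:
  fixes n k :: nat
  assumes "1 \<le> n" and "1 \<le> k" and "k \<le> n"
  shows "\<exists>\<eta>\<in>Omega n. \<eta> \<noteq> etak n k \<and>
           fk k (mJ n (Jeta n \<eta>)) = fk k (mJ n (Jeta n (etak n k)))"
proof -
  note k1 = assms(2) and kn = assms(3)
  define R where "R = RR n k"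
  define ds where "ds = dlist n k R"
  define z where "z = zk n k"
  have et: "etak n k = (z, ds)" unfolding R_def ds_def z_def by (rule etak_eq[OF k1 kn])
  have z01: "z \<in> {0, 1}" unfolding z_def zk_def by auto
  have R1: "1 \<le> R" unfolding R_def by (rule RR_props(3)[OF k1 kn])
  have sh: "shp ds R n" unfolding shp_def
  proof (intro conjI allI impI)
    show "length ds = Suc R" unfolding ds_def by (rule dlist_len)
    show "1 \<le> R" by (rule R1)
    show "ds ! 0 = 0" unfolding ds_def by (rule dlist_0)
    fix i assume "1 \<le> i \<and> i \<le> R"
    then show "1 \<le> ds ! i" unfolding ds_def R_def using RR_blocks[OF k1 kn] by auto
  next
    show "psum ds (Suc R) = n" unfolding ds_def psum_split R_def
      using RR_props(1)[OF k1 kn] unfolding Od_def Ev_def .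
  qed
  have SpT: "Sp ds True (Suc R) = Od n k R" and SpF: "Sp ds False (Suc R) = Ev n k R"
    unfolding Sp_def Od_def Ev_def ds_def by simp_all
  note fin = RR_final[OF k1 kn, folded R_def]
  define Sr where "Sr = Sp ds (odd R) (Suc R)"
  define So where "So = Sp ds (\<not> odd R) (Suc R)"
  define newf where "newf = (if (z = 1) = odd R then (0, int (So + 1)) else (int (So + 1), (0::int)))"
  have old: "vje n (z, ds) = (if (z = 1) = odd R then (int Sr, 0) else (0, int Sr))"
    using vje_cor[OF z01, of n ds] cor_n[OF sh] unfolding Sr_def by simp
  have f: "fk k (sh n (vje n (z, ds))) = fk k (sh n newf)"
  proof -
    have N: "int (n + 1 - k) = int n + 1 - int k" using kn by simp
    show ?thesis
    proof (cases "odd R")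
      case True
      then have S: "Sr = Pn n k" "So = Qn n k - 1" using fin SpT SpF unfolding Sr_def So_def by auto
      have So1: "So + 1 = Qn n k" using S PQ[OF k1 kn] by simp
      show ?thesis
      proof (cases "z = 1")
        case True
        then have "Pn n k = n + 1 - k" "Qn n k = k" unfolding Pn_def Qn_def z_def by auto
        then show ?thesis unfolding old newf_def using True \<open>odd R\<close> S So1 N
          by (simp add: fk_sh_x fk_sh_y)
      next
        case False
        then have "Pn n k = k" "Qn n k = n + 1 - k" unfolding Pn_def Qn_def z_def by auto
        then show ?thesis unfolding old newf_def using False \<open>odd R\<close> S So1 N
          by (simp add: fk_sh_x fk_sh_y mult.commute)
      qed
    next
      case False
      then have S: "Sr = Qn n k" "So = Pn n k - 1" using fin SpT SpF unfolding Sr_def So_def by auto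
      have So1: "So + 1 = Pn n k" using S PQ[OF k1 kn] by simp
      show ?thesis
      proof (cases "z = 1")
        case True
        then have "Pn n k = n + 1 - k" "Qn n k = k" unfolding Pn_def Qn_def z_def by auto
        then show ?thesis unfolding old newf_def using True \<open>\<not> odd R\<close> S So1 N
          by (simp add: fk_sh_x fk_sh_y mult.commute)
      next
        case False
        then have "Pn n k = k" "Qn n k = n + 1 - k" unfolding Pn_def Qn_def z_def by auto
        then show ?thesis unfolding old newf_def using False \<open>\<not> odd R\<close> S So1 N
          by (simp add: fk_sh_x fk_sh_y mult.commute)
      qed
    qed
  qed
  have dR: "1 \<le> ds ! R" using sh R1 unfolding shp_def by auto
  consider (A) "2 \<le> ds ! R" | (B) "ds ! R = 1" "2 \<le> R" | (C) "ds ! R = 1" "R = 1"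
    using dR R1 by linarith
  then show ?thesis
  proof cases
    case A
    define ds' where "ds' = take R ds @ [ds ! R - 1, 1]"
    note c = caseA[OF sh A z01 ds'_def]
    have "fk k (mJ n (Jeta n (z, ds'))) = fk k (mJ n (Jeta n (z, ds)))"
    proof -
      have e: "fk k (sh n (vje n (z, ds))) = fk k (sh n (vje n (z, ds')))"
        unfolding c(4) So_def[symmetric] newf_def[symmetric] by (rule f)
      show ?thesis
        apply (rule mainG[OF sh z01])
          apply (rule c(3); assumption)
         apply (rule c(4))
        apply (rule e)
        done
    qed
    then show ?thesis unfolding et using c(1,2) by blast
  next
    case B
    define ds' where "ds' = take (R - 1) ds @ [ds ! (R - 1) + 1]"
    note c = caseB[OF sh B z01 ds'_def]
    have "fk k (mJ n (Jeta n (z, ds'))) = fk k (mJ n (Jeta n (z, ds)))"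
    proof -
      have e: "fk k (sh n (vje n (z, ds))) = fk k (sh n (vje n (z, ds')))"
        unfolding c(4) So_def[symmetric] newf_def[symmetric] by (rule f)
      show ?thesis
        apply (rule mainG[OF sh z01])
          apply (rule c(3); assumption)
         apply (rule c(4))
        apply (rule e)
        done
    qed
    then show ?thesis unfolding et using c(1,2) by blast
  next
    case C
    note c = caseC[OF sh C z01]
    have "fk k (mJ n (Jeta n (1 - z, ds))) = fk k (mJ n (Jeta n (z, ds)))"
    proof -
      have e: "fk k (sh n (vje n (z, ds))) = fk k (sh n (vje n (1 - z, ds)))"
        unfolding c(4) So_def[symmetric] newf_def[symmetric] by (rule f)
      show ?thesis
        apply (rule mainG[OF sh z01])
          using c(3) apply simp
         apply (rule c(4))
        apply (rule e)
        done
    qed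
    then show ?thesis unfolding et using c(1,2) by blast
  qed
qed

end
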